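(* Let $q=p^a$, let $\iota:\mathbf Z_p\to\mathbf C$ be an embedding of rings, and let $(M,F)$ satisfy (M1)–(M4). Then complex conjugation on $M\otimes\mathbf C$ maps the subspace $M^s\otimes_{\mathbf Z_p,\iota}\mathbf C$ onto $M^{2-s}\otimes_{\mathbf Z_p,\iota}\mathbf C$ for $s=0,1,2$. In particular the decomposition $M\otimes\mathbf C=\bigoplus_s M^s\otimes_{\mathbf Z_p,\iota}\mathbf C$ (with $M^s\otimes_{\mathbf Z_p,\iota}\mathbf C$ in Hodge type $(s,2-s)$) is a $\mathbf Z$-Hodge structure on $M$.
   Context: $M$ is a free $\mathbf Z$-module of finite rank with a symmetric bilinear form $\langle-,-\rangle$ and $F$ an endomorphism of $M$. (M1) $\langle-,-\rangle$ is unimodular, even, of signature $(3,19)$; (M2) $\langle Fx,Fy\rangle=q^2\langle x,y\rangle$ for all $x,y$; (M3) $F$ is semisimple on $M\otimes\mathbf C$ with all eigenvalues of absolute value $q$; (M4) the $\mathbf Z_p[F]$-module $M\otimes\mathbf Z_p$ decomposes as $M^0\oplus M^1\oplus M^2$ with $FM^s=q^sM^s$ and $M^0,M^1,M^2$ free of ranks $1,20,1$. Here $M\otimes\mathbf C=(M\otimes\mathbf Z_p)\otimes_{\mathbf Z_p,\iota}\mathbf C$. *)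

theory Defs
  imports "HOL-Analysis.Analysis"
begin

text \<open>M is modelled as int^'n (a free Z-module with basis indexed by the finite type 'n);
  the symmetric bilinear form by its Gram matrix G, the endomorphism F by an integer matrix.\<close>

definition bil :: "int^'n^'n \<Rightarrow> int^'n \<Rightarrow> int^'n \<Rightarrow> int" where
  "bil G x y = (\<Sum>i\<in>UNIV. \<Sum>j\<in>UNIV. x$i * G$i$j * y$j)"

definition real_mat :: "int^'n^'m \<Rightarrow> real^'n^'m" where
  "real_mat A = (\<chi> i j. real_of_int (A$i$j))"

definition complex_mat :: "int^'n^'m \<Rightarrow> complex^'n^'m" where
  "complex_mat A = (\<chi> i j. complex_of_int (A$i$j))"

definition has_signature :: "real^'n^'n \<Rightarrow> nat \<Rightarrow> nat \<Rightarrow> bool" where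
  "has_signature A r s \<longleftrightarrow> CARD('n) = r + s \<and>
     (\<exists>P::real^'n^'n. \<exists>S::'n set. invertible P \<and> card S = r \<and>
        transpose P ** A ** P = (\<chi> i j. if i = j then (if i \<in> S then 1 else -1) else 0))"

definition M1 :: "int^'n^'n \<Rightarrow> bool" where
  "M1 G \<longleftrightarrow> transpose G = G \<and> (det G = 1 \<or> det G = -1) \<and>
     (\<forall>x. even (bil G x x)) \<and> has_signature (real_mat G) 3 19"

definition M2 :: "nat \<Rightarrow> int^'n^'n \<Rightarrow> int^'n^'n \<Rightarrow> bool" where
  "M2 q G F \<longleftrightarrow> (\<forall>x y. bil G (F *v x) (F *v y) = int q ^ 2 * bil G x y)"

text \<open>(M3): F is semisimple (= diagonalizable, C being algebraically closed) on M\<otimes>C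
  and every eigenvalue has absolute value q.\<close>
definition M3 :: "nat \<Rightarrow> int^'n^'n \<Rightarrow> bool" where
  "M3 q F \<longleftrightarrow>
     (\<exists>P::complex^'n^'n. \<exists>d::'n \<Rightarrow> complex. invertible P \<and>
        complex_mat F ** P = P ** (\<chi> i j. if i = j then d i else 0)) \<and>
     (\<forall>(c::complex) (v::complex^'n). v \<noteq> 0 \<and> complex_mat F *v v = c *s v \<longrightarrow> cmod c = real q)"

text \<open>An element of Z_p is a compatible sequence of residues x k \<in> {0..<p^k}.\<close>
definition Zp :: "nat \<Rightarrow> (nat \<Rightarrow> int) set" where
  "Zp p = {x. \<forall>k. 0 \<le> x k \<and> x k < int p ^ k \<and> x (Suc k) mod int p ^ k = x k}"

definition zp_add :: "nat \<Rightarrow> (nat \<Rightarrow> int) \<Rightarrow> (nat \<Rightarrow> int) \<Rightarrow> (nat \<Rightarrow> int)" where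
  "zp_add p x y = (\<lambda>k. (x k + y k) mod int p ^ k)"

definition zp_mult :: "nat \<Rightarrow> (nat \<Rightarrow> int) \<Rightarrow> (nat \<Rightarrow> int) \<Rightarrow> (nat \<Rightarrow> int)" where
  "zp_mult p x y = (\<lambda>k. (x k * y k) mod int p ^ k)"

definition zp_one :: "nat \<Rightarrow> (nat \<Rightarrow> int)" where
  "zp_one p = (\<lambda>k. 1 mod int p ^ k)"

definition ring_embedding :: "nat \<Rightarrow> ((nat \<Rightarrow> int) \<Rightarrow> complex) \<Rightarrow> bool" where
  "ring_embedding p \<iota> \<longleftrightarrow> inj_on \<iota> (Zp p) \<and> \<iota> (zp_one p) = 1 \<and>
     (\<forall>x\<in>Zp p. \<forall>y\<in>Zp p. \<iota> (zp_add p x y) = \<iota> x + \<iota> y \<and> \<iota> (zp_mult p x y) = \<iota> x * \<iota> y)"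

type_synonym 'n zpvec = "'n \<Rightarrow> nat \<Rightarrow> int"

definition ZpV :: "nat \<Rightarrow> 'n zpvec set" where
  "ZpV p = {x. \<forall>i. x i \<in> Zp p}"

definition zpv_add :: "nat \<Rightarrow> 'n zpvec \<Rightarrow> 'n zpvec \<Rightarrow> 'n zpvec" where
  "zpv_add p x y = (\<lambda>i. zp_add p (x i) (y i))"

text \<open>Action of an integer matrix (F \<otimes> id) on Z_p^n, computed level-wise modulo p^k.\<close>
definition zpv_mat :: "nat \<Rightarrow> int^'n^'n \<Rightarrow> 'n zpvec \<Rightarrow> 'n zpvec" where
  "zpv_mat p F x = (\<lambda>i k. (\<Sum>j\<in>UNIV. F$i$j * x j k) mod int p ^ k)"

definition zpv_smul_int :: "nat \<Rightarrow> int \<Rightarrow> 'n zpvec \<Rightarrow> 'n zpvec" where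
  "zpv_smul_int p c x = (\<lambda>i k. (c * x i k) mod int p ^ k)"

definition zpv_lincomb :: "nat \<Rightarrow> nat \<Rightarrow> (nat \<Rightarrow> nat \<Rightarrow> int) \<Rightarrow> (nat \<Rightarrow> 'n zpvec) \<Rightarrow> 'n zpvec" where
  "zpv_lincomb p r c b = (\<lambda>i k. (\<Sum>l<r. c l k * b l i k) mod int p ^ k)"

definition zp_free_submodule :: "nat \<Rightarrow> 'n zpvec set \<Rightarrow> nat \<Rightarrow> bool" where
  "zp_free_submodule p N r \<longleftrightarrow>
     (\<exists>b. (\<forall>l<r. b l \<in> ZpV p) \<and>
        N = {zpv_lincomb p r c b | c. \<forall>l<r. c l \<in> Zp p} \<and>
        (\<forall>c c'. (\<forall>l<r. c l \<in> Zp p \<and> c' l \<in> Zp p) \<longrightarrow>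
            zpv_lincomb p r c b = zpv_lincomb p r c' b \<longrightarrow> (\<forall>l<r. c l = c' l)))"

definition M4 :: "nat \<Rightarrow> nat \<Rightarrow> int^'n^'n \<Rightarrow> (nat \<Rightarrow> 'n zpvec set) \<Rightarrow> bool" where
  "M4 p q F Ms \<longleftrightarrow>
     zp_free_submodule p (Ms 0) 1 \<and> zp_free_submodule p (Ms 1) 20 \<and> zp_free_submodule p (Ms 2) 1 \<and>
     (\<forall>x\<in>ZpV p. \<exists>!(x0, x1, x2). x0 \<in> Ms 0 \<and> x1 \<in> Ms 1 \<and> x2 \<in> Ms 2 \<and>
         x = zpv_add p x0 (zpv_add p x1 x2)) \<and>
     (\<forall>s\<le>2. zpv_mat p F ` Ms s = zpv_smul_int p (int q ^ s) ` Ms s)"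

definition iota_vec :: "((nat \<Rightarrow> int) \<Rightarrow> complex) \<Rightarrow> 'n zpvec \<Rightarrow> complex^'n" where
  "iota_vec \<iota> x = (\<chi> i. \<iota> (x i))"

definition cspan :: "(complex^'n) set \<Rightarrow> (complex^'n) set" where
  "cspan S = {v. \<exists>T c. finite T \<and> T \<subseteq> S \<and> v = (\<Sum>u\<in>T. c u *s u)}"

text \<open>The image of M^s \<otimes>_{Z_p,iota} C in M \<otimes> C = C^n.\<close>
definition base_change :: "((nat \<Rightarrow> int) \<Rightarrow> complex) \<Rightarrow> 'n zpvec set \<Rightarrow> (complex^'n) set" where
  "base_change \<iota> N = cspan (iota_vec \<iota> ` N)"

definition vcnj :: "complex^'n \<Rightarrow> complex^'n" where
  "vcnj v = (\<chi> i. cnj (v$i))"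

definition csubspace :: "(complex^'n) set \<Rightarrow> bool" where
  "csubspace V \<longleftrightarrow> 0 \<in> V \<and> (\<forall>u\<in>V. \<forall>v\<in>V. u + v \<in> V) \<and> (\<forall>c. \<forall>v\<in>V. c *s v \<in> V)"

text \<open>A Z-Hodge structure of weight w on M = Z^n: a decomposition
  M \<otimes> C = \<Oplus>_{p+q=w} H^{p,q} (H p = H^{p,w-p}, only finitely many nonzero)
  with complex conjugation (w.r.t. the real structure M \<otimes> R) mapping H^{p,q} onto H^{q,p}.\<close>
definition Z_hodge_structure :: "int \<Rightarrow> (int \<Rightarrow> (complex^'n) set) \<Rightarrow> bool" where
  "Z_hodge_structure w H \<longleftrightarrow>
     (\<forall>p. csubspace (H p)) \<and>
     (\<exists>A. finite A \<and> (\<forall>p. p \<notin> A \<longrightarrow> H p = {0}) \<and>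
        (\<forall>v. \<exists>!h. (\<forall>p\<in>A. h p \<in> H p) \<and> (\<forall>p. p \<notin> A \<longrightarrow> h p = 0) \<and> v = (\<Sum>p\<in>A. h p))) \<and>
     (\<forall>p. vcnj ` H p = H (w - p))"

end

theory Submission
  imports Defs
begin



locale zpe =
  fixes p :: nat and \<iota> :: "(nat \<Rightarrow> int) \<Rightarrow> complex"
  assumes p1: "p > 1" and emb: "ring_embedding p \<iota>"
begin

definition zc :: "int \<Rightarrow> nat \<Rightarrow> int" where "zc n = (\<lambda>k. n mod int p ^ k)"

lemma ppos: "int p ^ k > 0" using p1 by simp

lemma Zp_modI:
  assumes "\<And>k. f (Suc k) mod int p ^ k = f k mod int p ^ k"
  shows "(\<lambda>k. f k mod int p ^ k) \<in> Zp p"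
proof -
  have "f (Suc k) mod int p ^ Suc k mod int p ^ k = f k mod int p ^ k" for k
    using assms[of k] by (simp add: mod_mod_cancel)
  then show ?thesis unfolding Zp_def using ppos by (auto simp: pos_mod_bound)
qed

lemma Zp_D: "x \<in> Zp p \<Longrightarrow> x (Suc k) mod int p ^ k = x k mod int p ^ k"
  unfolding Zp_def by auto

lemma Zp_eq: "x \<in> Zp p \<Longrightarrow> (\<lambda>k. x k mod int p ^ k) = x"
  unfolding Zp_def by (auto intro!: ext)

lemma zc_Zp[simp]: "zc n \<in> Zp p"
  unfolding zc_def by (rule Zp_modI) simp

lemma zp_add_Zp[simp]: "x \<in> Zp p \<Longrightarrow> y \<in> Zp p \<Longrightarrow> zp_add p x y \<in> Zp p"
  unfolding zp_add_def by (rule Zp_modI) (metis Zp_D mod_add_eq)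

lemma zp_mult_Zp[simp]: "x \<in> Zp p \<Longrightarrow> y \<in> Zp p \<Longrightarrow> zp_mult p x y \<in> Zp p"
  unfolding zp_mult_def by (rule Zp_modI) (metis Zp_D mod_mult_eq)

lemma iadd: "x \<in> Zp p \<Longrightarrow> y \<in> Zp p \<Longrightarrow> \<iota> (zp_add p x y) = \<iota> x + \<iota> y"
  using emb unfolding ring_embedding_def by auto
lemma imult: "x \<in> Zp p \<Longrightarrow> y \<in> Zp p \<Longrightarrow> \<iota> (zp_mult p x y) = \<iota> x * \<iota> y"
  using emb unfolding ring_embedding_def by auto
lemma iinj: "x \<in> Zp p \<Longrightarrow> y \<in> Zp p \<Longrightarrow> \<iota> x = \<iota> y \<Longrightarrow> x = y"
  using emb unfolding ring_embedding_def inj_on_def by auto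
lemma ione: "\<iota> (zc 1) = 1"
  using emb unfolding ring_embedding_def zp_one_def zc_def by auto

lemma zc_add: "zp_add p (zc m) (zc n) = zc (m + n)"
  unfolding zp_add_def zc_def by (auto simp: mod_add_eq)

lemma izc_add: "\<iota> (zc (m + n)) = \<iota> (zc m) + \<iota> (zc n)"
  by (metis iadd zc_Zp zc_add)

lemma izc0: "\<iota> (zc 0) = 0"
  using izc_add[of 0 0] by simp

lemma izc_nat: "\<iota> (zc (int k)) = of_nat k"
  by (induction k) (simp_all add: izc0 izc_add ione add.commute)

lemma izc: "\<iota> (zc n) = of_int n"
proof (cases "n \<ge> 0")
  case True then show ?thesis by (metis izc_nat of_int_of_nat_eq nonneg_int_cases)
next
  case False
  then obtain k where k: "n = - int k" by (metis linorder_not_le neg_int_cases less_imp_le)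
  have "\<iota> (zc (n + int k)) = 0" using k izc0 by simp
  then have "\<iota> (zc n) + of_nat k = 0" using izc_add[of n "int k"] izc_nat[of k] by simp
  then have "\<iota> (zc n) = - of_nat k" by (simp add: eq_neg_iff_add_eq_0)
  then show ?thesis using k by simp
qed

lemma zc_mult: "x \<in> Zp p \<Longrightarrow> (\<lambda>k. (c * x k) mod int p ^ k) = zp_mult p (zc c) x"
  unfolding zp_mult_def zc_def by (auto simp: mod_mult_left_eq)

lemma izc_mult: "x \<in> Zp p \<Longrightarrow> \<iota> (\<lambda>k. (c * x k) mod int p ^ k) = of_int c * \<iota> x"
  by (simp add: zc_mult imult izc)

lemma sum_mod:
  assumes "finite S" "\<And>j. j \<in> S \<Longrightarrow> (\<lambda>k. h j k mod int p ^ k) \<in> Zp p"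
  shows "(\<lambda>k. (\<Sum>j\<in>S. h j k) mod int p ^ k) \<in> Zp p \<and>
         \<iota> (\<lambda>k. (\<Sum>j\<in>S. h j k) mod int p ^ k) = (\<Sum>j\<in>S. \<iota> (\<lambda>k. h j k mod int p ^ k))"
  using assms
proof (induction S rule: finite_induct)
  case empty
  have "(\<lambda>k. (0::int) mod int p ^ k) = zc 0" by (simp add: zc_def)
  then show ?case using izc0 by simp
next
  case (insert i S)
  have e: "(\<lambda>k. (\<Sum>j\<in>insert i S. h j k) mod int p ^ k) =
      zp_add p (\<lambda>k. h i k mod int p ^ k) (\<lambda>k. (\<Sum>j\<in>S. h j k) mod int p ^ k)"
    using insert(1,2) by (auto simp: zp_add_def mod_add_eq intro!: ext)
  show ?case using insert unfolding e by (simp add: iadd)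
qed

definition R where "R = \<iota> ` Zp p"

lemma R_int[simp]: "of_int n \<in> R"
  unfolding R_def by (metis izc zc_Zp image_eqI)
lemma R_0[simp]: "0 \<in> R" using R_int[of 0] by simp
lemma R_1[simp]: "1 \<in> R" using R_int[of 1] by simp
lemma R_add[simp]: "x \<in> R \<Longrightarrow> y \<in> R \<Longrightarrow> x + y \<in> R"
  unfolding R_def by (auto simp: iadd[symmetric] intro: zp_add_Zp)
lemma R_mult[simp]: "x \<in> R \<Longrightarrow> y \<in> R \<Longrightarrow> x * y \<in> R"
  unfolding R_def by (auto simp: imult[symmetric] intro: zp_mult_Zp)
lemma R_uminus[simp]: "x \<in> R \<Longrightarrow> - x \<in> R"
  using R_mult[OF R_int[of "-1"]] by simp
lemma R_diff[simp]: "x \<in> R \<Longrightarrow> y \<in> R \<Longrightarrow> x - y \<in> R"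
  using R_add R_uminus by (metis diff_conv_add_uminus)
lemma R_power[simp]: "x \<in> R \<Longrightarrow> x ^ n \<in> R"
  by (induction n) auto
lemma R_nat[simp]: "of_nat n \<in> R" by (metis R_int of_int_of_nat_eq)
lemma R_sum: "(\<And>i. i \<in> S \<Longrightarrow> f i \<in> R) \<Longrightarrow> sum f S \<in> R"
  by (induction S rule: infinite_finite_induct) auto
lemma R_prod: "(\<And>i. i \<in> S \<Longrightarrow> f i \<in> R) \<Longrightarrow> prod f S \<in> R"
  by (induction S rule: infinite_finite_induct) auto

lemma R_nonunit: "r \<in> R \<Longrightarrow> of_nat p * r \<noteq> 1"
proof
  assume r: "r \<in> R" and e: "of_nat p * r = 1"
  then obtain y where y: "y \<in> Zp p" "r = \<iota> y" unfolding R_def by auto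
  have "\<iota> (zp_mult p (zc (int p)) y) = \<iota> (zc 1)"
    using e y by (simp add: imult izc ione)
  then have "zp_mult p (zc (int p)) y = zc 1" using y by (intro iinj) auto
  then have "zp_mult p (zc (int p)) y 1 = zc 1 1" by simp
  then show False using p1 by (simp add: zp_mult_def zc_def)
qed

lemma ZpV_D: "x \<in> ZpV p \<Longrightarrow> x i \<in> Zp p" by (simp add: ZpV_def)

lemma ivec_add: "x \<in> ZpV p \<Longrightarrow> y \<in> ZpV p \<Longrightarrow>
   zpv_add p x y \<in> ZpV p \<and> iota_vec \<iota> (zpv_add p x y) = iota_vec \<iota> x + iota_vec \<iota> y"
  by (simp add: iota_vec_def zpv_add_def iadd ZpV_def vec_eq_iff)

lemma ivec_mat:
  fixes F :: "int^'n^'n"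
  assumes x: "x \<in> ZpV p"
  shows "zpv_mat p F x \<in> ZpV p \<and> iota_vec \<iota> (zpv_mat p F x) = complex_mat F *v iota_vec \<iota> x"
proof -
  have *: "(\<lambda>k. (\<Sum>j\<in>UNIV. F$i$j * x j k) mod int p ^ k) \<in> Zp p \<and>
      \<iota> (\<lambda>k. (\<Sum>j\<in>UNIV. F$i$j * x j k) mod int p ^ k) = (\<Sum>j\<in>UNIV. of_int (F$i$j) * \<iota> (x j))" for i
  proof -
    have "(\<lambda>k. (F$i$j * x j k) mod int p ^ k) \<in> Zp p" for j
      using zc_mult[OF ZpV_D[OF x]] ZpV_D[OF x] by simp
    from sum_mod[of UNIV "\<lambda>j k. F$i$j * x j k", OF _ this] show ?thesis
      using izc_mult[OF ZpV_D[OF x]] by simp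
  qed
  show ?thesis using *
    by (auto simp: ZpV_def zpv_mat_def iota_vec_def vec_eq_iff matrix_vector_mult_def complex_mat_def)
qed

lemma ivec_smul:
  assumes x: "x \<in> ZpV p"
  shows "zpv_smul_int p c x \<in> ZpV p \<and> iota_vec \<iota> (zpv_smul_int p c x) = of_int c *s iota_vec \<iota> x"
  using x zc_mult[OF ZpV_D[OF x]] izc_mult[OF ZpV_D[OF x]]
  by (auto simp: ZpV_def zpv_smul_int_def iota_vec_def vec_eq_iff)

lemma ivec_lincomb:
  assumes "\<And>l. l < r \<Longrightarrow> c l \<in> Zp p \<and> b l \<in> ZpV p"
  shows "zpv_lincomb p r c b \<in> ZpV p \<and>
     iota_vec \<iota> (zpv_lincomb p r c b) = (\<Sum>l<r. \<iota> (c l) *s iota_vec \<iota> (b l))"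
proof -
  have *: "(\<lambda>k. (\<Sum>l<r. c l k * b l i k) mod int p ^ k) \<in> Zp p \<and>
      \<iota> (\<lambda>k. (\<Sum>l<r. c l k * b l i k) mod int p ^ k) = (\<Sum>l<r. \<iota> (c l) * \<iota> (b l i))" for i
  proof -
    have e: "l < r \<Longrightarrow> (\<lambda>k. (c l k * b l i k) mod int p ^ k) = zp_mult p (c l) (b l i)" for l
      by (simp add: zp_mult_def)
    have "l \<in> {..<r} \<Longrightarrow> (\<lambda>k. (c l k * b l i k) mod int p ^ k) \<in> Zp p" for l
      using assms[of l] e[of l] by (simp add: ZpV_D)
    from sum_mod[of "{..<r}" "\<lambda>l k. c l k * b l i k", OF _ this] show ?thesis
      using assms e by (simp add: imult ZpV_D)
  qed
  show ?thesis using *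
    by (auto simp: ZpV_def zpv_lincomb_def iota_vec_def vec_eq_iff)
qed

lemma free_facts:
  assumes "zp_free_submodule p N r"
  shows "\<exists>e :: nat \<Rightarrow> complex^'n. (\<forall>y\<in>(N::'n zpvec set). y \<in> ZpV p \<and>
            (\<exists>g. (\<forall>l<r. g l \<in> R) \<and> iota_vec \<iota> y = (\<Sum>l<r. g l *s e l))) \<and>
         (\<forall>l<r. \<exists>y\<in>N. iota_vec \<iota> y = e l)"
proof -
  obtain b where b: "\<forall>l<r. b l \<in> ZpV p" and N: "N = {zpv_lincomb p r c b | c. \<forall>l<r. c l \<in> Zp p}"
    using assms unfolding zp_free_submodule_def by blast
  define e where "e l = iota_vec \<iota> (b l)" for l
  have 1: "\<forall>y\<in>N. y \<in> ZpV p \<and> (\<exists>g. (\<forall>l<r. g l \<in> R) \<and> iota_vec \<iota> y = (\<Sum>l<r. g l *s e l))"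
  proof
    fix y assume "y \<in> N"
    then obtain c where c: "\<forall>l<r. c l \<in> Zp p" and y: "y = zpv_lincomb p r c b" using N by auto
    show "y \<in> ZpV p \<and> (\<exists>g. (\<forall>l<r. g l \<in> R) \<and> iota_vec \<iota> y = (\<Sum>l<r. g l *s e l))"
      using ivec_lincomb[of r c b] c b unfolding y e_def
      by (intro conjI exI[of _ "\<lambda>l. \<iota> (c l)"]) (auto simp: R_def)
  qed
  have 2: "\<forall>l<r. \<exists>y\<in>N. iota_vec \<iota> y = e l"
  proof (intro allI impI)
    fix l assume l: "l < r"
    define c where "c l' = (if l' = l then zc 1 else zc 0)" for l'
    have cZ: "\<forall>l<r. c l \<in> Zp p" by (simp add: c_def)
    have "iota_vec \<iota> (zpv_lincomb p r c b) = (\<Sum>l'<r. \<iota> (c l') *s e l')"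
      using ivec_lincomb[of r c b] cZ b unfolding e_def by auto
    also have "\<dots> = (\<Sum>l'<r. if l' = l then e l' else 0)"
      by (intro sum.cong) (auto simp: c_def izc)
    also have "\<dots> = e l" using l by simp
    finally show "\<exists>y\<in>N. iota_vec \<iota> y = e l" using N cZ by blast
  qed
  show ?thesis using 1 2 by blast
qed

lemma prod_pert:
  assumes "finite S" "\<mu> \<in> R" "\<And>i. i \<in> S \<Longrightarrow> x i \<in> R \<and> y i \<in> R"
  shows "\<exists>r\<in>R. (\<Prod>i\<in>S. x i + \<mu> * y i) = (\<Prod>i\<in>S. x i) + \<mu> * r"
  using assms
proof (induction S rule: finite_induct)
  case empty then show ?case by (intro bexI[of _ 0]) auto
next
  case (insert i S)
  then obtain r where r: "r \<in> R" "(\<Prod>i\<in>S. x i + \<mu> * y i) = (\<Prod>i\<in>S. x i) + \<mu> * r" by auto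
  have xi: "x i \<in> R" "y i \<in> R" using insert by auto
  have P: "(\<Prod>i\<in>S. x i) \<in> R" using insert by (auto intro: R_prod)
  show ?case
    using insert(1,2) r xi P insert.prems(1)
    by (intro bexI[of _ "x i * r + y i * ((\<Prod>i\<in>S. x i) + \<mu> * r)"]) (auto simp: algebra_simps)
qed

lemma sum_pert:
  assumes "finite S" "\<And>i. i \<in> S \<Longrightarrow> \<exists>r\<in>R. a i = b i + \<mu> * r"
  shows "\<exists>r\<in>R. (\<Sum>i\<in>S. a i) = (\<Sum>i\<in>S. b i) + \<mu> * r"
  using assms
proof (induction S rule: finite_induct)
  case empty then show ?case by (intro bexI[of _ 0]) auto
next
  case (insert i S)
  then obtain r where r: "r \<in> R" "(\<Sum>i\<in>S. a i) = (\<Sum>i\<in>S. b i) + \<mu> * r" by auto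
  obtain r' where r': "r' \<in> R" "a i = b i + \<mu> * r'" using insert by auto
  show ?case using insert(1,2) r r'
    by (intro bexI[of _ "r + r'"]) (auto simp: algebra_simps)
qed

lemma det_pert:
  fixes N K :: "complex^'m^'m"
  assumes "\<mu> \<in> R" "\<And>i j. N$i$j \<in> R" "\<And>i j. K$i$j \<in> R"
  shows "\<exists>r\<in>R. det (\<chi> i j. N$i$j + \<mu> * K$i$j) = det N + \<mu> * r"
  unfolding det_def
proof (rule sum_pert)
  show "finite {p. p permutes (UNIV::'m set)}" by (simp add: finite_permutations)
  fix \<pi> assume "\<pi> \<in> {p. p permutes (UNIV::'m set)}"
  obtain r where r: "r \<in> R" "(\<Prod>i\<in>UNIV. N$i$\<pi> i + \<mu> * K$i$\<pi> i) = (\<Prod>i\<in>UNIV. N$i$\<pi> i) + \<mu> * r"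
    using prod_pert[of UNIV \<mu> "\<lambda>i. N$i$\<pi> i" "\<lambda>i. K$i$\<pi> i"] assms by auto
  show "\<exists>r\<in>R. of_int (sign \<pi>) * (\<Prod>i\<in>UNIV. (\<chi> i j. N$i$j + \<mu> * K$i$j) $ i $ \<pi> i) =
      of_int (sign \<pi>) * (\<Prod>i\<in>UNIV. N $ i $ \<pi> i) + \<mu> * r"
    using r by (intro bexI[of _ "of_int (sign \<pi>) * r"]) (auto simp: algebra_simps)
qed

lemma kernel_zero:
  fixes N :: "complex^'m^'m" and v :: "complex^'m"
  assumes N: "\<And>i j. N$i$j \<in> R" and t: "t \<in> R" and v: "v = (of_nat p * t) *s (N *v v)"
  shows "v = 0"
proof (rule ccontr)
  assume nz: "v \<noteq> 0"
  define M where "M = (\<chi> i j. (mat 1 :: complex^'m^'m)$i$j + (- (of_nat p * t)) * N$i$j)"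
  have d: "(\<Sum>j\<in>UNIV. v $ j * (if i = j then 1 else 0)) = v $ i" for i
  proof -
    have "(\<Sum>j\<in>UNIV. v $ j * (if i = j then 1 else 0)) = (\<Sum>j\<in>UNIV. if i = j then v$j else 0)"
      by (intro sum.cong) auto
    then show ?thesis by simp
  qed
  have "M *v v = v - (of_nat p * t) *s (N *v v)"
    by (simp add: M_def vec_eq_iff matrix_vector_mult_def mat_def algebra_simps sum.distrib
        sum_distrib_left sum_subtractf d)
  then have Mv: "M *v v = 0" using v by simp
  have "det M = 0"
  proof (rule ccontr)
    assume "det M \<noteq> 0"
    then obtain A' where "A' ** M = mat 1" using invertible_det_nz[of M] unfolding invertible_def by auto
    then have "v = A' *v (M *v v)" by (simp add: matrix_vector_mul_assoc)
    then show False using Mv nz by simp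
  qed
  moreover obtain r where r: "r \<in> R" "det M = det (mat 1 :: complex^'m^'m) + (- (of_nat p * t)) * r"
  proof -
    have m1: "\<And>i j. (mat 1 :: complex^'m^'m)$i$j \<in> R" by (simp add: mat_def)
    have mu: "- (of_nat p * t) \<in> R" using t by simp
    show ?thesis using det_pert[OF mu m1 N] that unfolding M_def by blast
  qed
  ultimately have "of_nat p * (t * r) = 1" by (simp add: algebra_simps)
  then show False using R_nonunit[of "t * r"] t r by simp
qed

end




lemma vcnj_vcnj[simp]: "vcnj (vcnj v) = v" by (simp add: vcnj_def vec_eq_iff)
lemma vcnj_add: "vcnj (u + v) = vcnj u + vcnj v" by (simp add: vcnj_def vec_eq_iff)
lemma vcnj_scale: "vcnj (c *s v) = cnj c *s vcnj v" by (simp add: vcnj_def vec_eq_iff)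
lemma vcnj_zero[simp]: "vcnj 0 = 0" by (simp add: vcnj_def vec_eq_iff)
lemma vcnj_eq0[simp]: "vcnj v = 0 \<longleftrightarrow> v = 0" by (metis vcnj_vcnj vcnj_zero)
lemma vcnj_sum: "vcnj (sum g S) = (\<Sum>x\<in>S. vcnj (g x))"
  by (induction S rule: infinite_finite_induct) (auto simp: vcnj_add)

lemma vcnj_span_sub: "x \<in> vec.span S \<Longrightarrow> vcnj x \<in> vec.span (vcnj ` S)"
proof (induction rule: vec.span_induct_alt)
  case base then show ?case by (simp add: vec.span_zero)
next
  case (step c x y)
  then show ?case by (simp add: vcnj_add vcnj_scale vec.span_add vec.span_scale vec.span_base)
qed

lemma vcnj_span: "vcnj ` vec.span S = vec.span (vcnj ` S)"
proof
  show "vcnj ` vec.span S \<subseteq> vec.span (vcnj ` S)" using vcnj_span_sub by blast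
  show "vec.span (vcnj ` S) \<subseteq> vcnj ` vec.span S"
  proof
    fix x assume "x \<in> vec.span (vcnj ` S)"
    then have "vcnj x \<in> vec.span (vcnj ` vcnj ` S)" by (rule vcnj_span_sub)
    then have "vcnj x \<in> vec.span S" by (simp add: image_image)
    then show "x \<in> vcnj ` vec.span S" by (metis image_eqI vcnj_vcnj)
  qed
qed

lemma span_single_scale: "c \<noteq> 0 \<Longrightarrow> vec.span {c *s x} = vec.span {x}"
proof -
  assume c: "c \<noteq> 0"
  have "vec.span {c *s x} \<subseteq> vec.span {x}"
    by (rule vec.span_minimal) (auto simp: vec.span_scale vec.span_base vec.subspace_span)
  moreover have eq: "inverse c *s (c *s x) = x" using c by (simp add: vector_smult_assoc)
  have x_in: "inverse c *s (c *s x) \<in> vec.span {c *s x}" by (intro vec.span_scale vec.span_base) simp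
  have "x \<in> vec.span {c *s x}" using x_in unfolding eq .
  then have "vec.span {x} \<subseteq> vec.span {c *s x}"
    by (intro vec.span_minimal) (auto simp: vec.subspace_span)
  ultimately show ?thesis by blast
qed

locale fam =
  fixes f :: "nat \<Rightarrow> complex^'n" and n :: nat
  assumes cardn: "CARD('n) = n" and spanf: "vec.span (f ` {..<n}) = UNIV"
begin

lemma indep: "vec.independent (f ` {..<n})"
proof (rule vec.card_le_dim_spanning[of _ UNIV])
  show "vec.dim (UNIV :: (complex^'n) set) \<ge> card (f ` {..<n})"
    using card_image_le[of "{..<n}" f] cardn by (simp add: vec_dim_card card_cart_basis)
qed (use spanf in auto)

lemma inj: "inj_on f {..<n}"
proof -
  have "vec.dim (UNIV :: (complex^'n) set) \<le> card (f ` {..<n})"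
    by (rule vec.span_card_ge_dim) (use spanf in auto)
  then have "card (f ` {..<n}) = card {..<n}"
    using card_image_le[of "{..<n}" f] cardn by (simp add: vec_dim_card card_cart_basis)
  then show ?thesis by (simp add: inj_on_iff_eq_card)
qed

lemma sum_reindex: "(\<Sum>v\<in>f ` S. g v) = (\<Sum>j\<in>S. g (f j))" if "S \<subseteq> {..<n}"
  using inj that by (simp add: sum.reindex inj_on_subset)

lemma indep_explicit:
  assumes "(\<Sum>j<n. a j *s f j) = 0" "j < n"
  shows "a j = 0"
proof (rule ccontr)
  assume nz: "a j \<noteq> 0"
  define u where "u v = a (the_inv_into {..<n} f v)" for v
  have uf: "k < n \<Longrightarrow> u (f k) = a k" for k
    unfolding u_def using inj by (simp add: the_inv_into_f_f)
  have "(\<Sum>v\<in>f ` {..<n}. u v *s v) = (\<Sum>k<n. u (f k) *s f k)" by (rule sum_reindex) auto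
  also have "\<dots> = (\<Sum>k<n. a k *s f k)" by (intro sum.cong) (auto simp: uf)
  finally have "(\<Sum>v\<in>f ` {..<n}. u v *s v) = 0" using assms by simp
  moreover have "\<exists>v\<in>f ` {..<n}. u v \<noteq> 0" using nz assms(2) uf by force
  ultimately have "vec.dependent (f ` {..<n})" by (subst vec.dependent_finite) auto
  then show False using indep by simp
qed

lemma coord_exists: "\<exists>a. y = (\<Sum>j<n. a j *s f j)"
proof -
  have "y \<in> vec.span (f ` {..<n})" using spanf by simp
  then obtain u where "y = (\<Sum>v\<in>f ` {..<n}. u v *s v)" by (auto simp: vec.span_finite)
  then have "y = (\<Sum>j<n. u (f j) *s f j)" using sum_reindex[of "{..<n}"] by simp
  then show ?thesis by (intro exI[of _ "\<lambda>j. u (f j)"])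
qed

definition co where "co y = (SOME a. y = (\<Sum>j<n. a j *s f j))"

lemma co_spec: "y = (\<Sum>j<n. co y j *s f j)"
  unfolding co_def using someI_ex[OF coord_exists[of y]] .

lemma co_unique:
  assumes "y = (\<Sum>j<n. a j *s f j)" "j < n"
  shows "co y j = a j"
proof -
  have "(\<Sum>j<n. (co y j - a j) *s f j) = 0"
    using co_spec[of y] assms(1) by (simp add: vector_sub_rdistrib sum_subtractf)
  then show ?thesis using indep_explicit[of "\<lambda>j. co y j - a j" j] assms(2) by simp
qed

lemma co_add: "j < n \<Longrightarrow> co (x + y) j = co x j + co y j"
proof (rule co_unique)
  have "x + y = (\<Sum>j<n. co x j *s f j) + (\<Sum>j<n. co y j *s f j)"
    by (rule arg_cong2[where f="(+)"]; rule co_spec)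
  also have "\<dots> = (\<Sum>j<n. (co x j + co y j) *s f j)"
    by (simp add: vec.scale_left_distrib sum.distrib)
  finally show "x + y = (\<Sum>j<n. (co x j + co y j) *s f j)" .
qed
    
lemma co_scale: "j < n \<Longrightarrow> co (c *s x) j = c * co x j"
proof (rule co_unique)
  show "c *s x = (\<Sum>j<n. (c * co x j) *s f j)"
    by (subst co_spec[of x]) (simp add: vec.scale_sum_right vector_smult_assoc)
qed

lemma co_sum: "finite A \<Longrightarrow> j < n \<Longrightarrow> co (\<Sum>i\<in>A. g i) j = (\<Sum>i\<in>A. co (g i) j)"
proof (induction A rule: finite_induct)
  case empty
  have "co 0 j = 0" using co_unique[of 0 "\<lambda>_. 0" j] empty by simp
  then show ?case by simp
qed (simp add: co_add)

lemma co_f: "j < n \<Longrightarrow> k < n \<Longrightarrow> co (f k) j = (if j = k then 1 else 0)"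
  by (rule co_unique) (auto simp: if_distrib[of "\<lambda>c. c *s _"] cong: if_cong)

lemma eq_co: "(\<And>j. j < n \<Longrightarrow> co x j = co y j) \<Longrightarrow> x = y"
  by (metis (no_types, lifting) co_spec lessThan_iff sum.cong)

lemma span_sub:
  assumes "S \<subseteq> {..<n}"
  shows "vec.span (f ` S) = {y. \<forall>j<n. j \<notin> S \<longrightarrow> co y j = 0}"
proof safe
  fix y j assume y: "y \<in> vec.span (f ` S)" and j: "j < n" "j \<notin> S"
  have fin: "finite S" using assms finite_subset by blast
  from y obtain u where "y = (\<Sum>v\<in>f ` S. u v *s v)" by (auto simp: vec.span_finite fin)
  also have "\<dots> = (\<Sum>k\<in>S. u (f k) *s f k)" by (rule sum_reindex[OF assms])
  also have "\<dots> = (\<Sum>k<n. (if k \<in> S then u (f k) else 0) *s f k)"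
    using assms by (simp add: if_distrib[of "\<lambda>c. c *s _"] sum.If_cases Int_absorb1 Int_absorb2 cong: if_cong)
  finally show "co y j = 0" using co_unique j by simp
next
  fix y assume h: "\<forall>j<n. j \<notin> S \<longrightarrow> co y j = 0"
  have "y = (\<Sum>j<n. co y j *s f j)" by (rule co_spec)
  also have "\<dots> = (\<Sum>j\<in>S. co y j *s f j)"
    using h assms by (intro sum.mono_neutral_right) auto
  moreover have "(\<Sum>j\<in>S. co y j *s f j) \<in> vec.span (f ` S)"
    by (intro vec.span_sum vec.span_scale vec.span_base imageI)
  ultimately show "y \<in> vec.span (f ` S)" by simp
qed

end



locale abs = zpe p \<iota> + fam f "22::nat"
  for p \<iota> and f :: "nat \<Rightarrow> complex^'n" +
  fixes Fc :: "complex^'n^'n" and q a :: nat and \<alpha>0 \<beta>0 \<gamma> \<delta> :: complex and A :: "nat \<Rightarrow> nat \<Rightarrow> complex"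
  assumes qa: "q = p ^ a" "a > 0"
    and inR: "\<alpha>0 \<in> R" "\<beta>0 \<in> R" "\<gamma> \<in> R" "\<delta> \<in> R" "\<And>l m. A l m \<in> R"
    and units: "\<alpha>0 * \<beta>0 = 1" "\<gamma> * \<delta> = 1"
    and Ff0: "Fc *v f 0 = \<alpha>0 *s f 0"
    and Ff2: "Fc *v f 21 = (of_nat q ^ 2 * \<gamma>) *s f 21"
    and Ff1: "\<And>l. l < 20 \<Longrightarrow> Fc *v f (Suc l) = of_nat q *s (\<Sum>m<20. A l m *s f (Suc m))"
    and Freal: "\<And>v. Fc *v vcnj v = vcnj (Fc *v v)"
    and Fmod: "\<And>c v. v \<noteq> 0 \<Longrightarrow> Fc *v v = c *s v \<Longrightarrow> cmod c = real q"
    and Fdiag: "\<exists>(P::complex^'n^'n) d. invertible P \<and> Fc ** P = P ** (\<chi> i j. if i = j then d i else 0)"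
begin

abbreviation "Q2 \<equiv> of_nat q ^ 2 * \<gamma>"
abbreviation "S1 \<equiv> {1..20::nat}"

definition Mf where "Mf j k = (if j = 0 then (if k = 0 then \<alpha>0 else 0) else if j \<le> 20 then
   (if 1 \<le> k \<and> k \<le> 20 then of_nat q * A (j-1) (k-1) else 0) else (if k = 21 then Q2 else 0))"

lemma S1_Suc: "S1 = Suc ` {..<20}"
proof -
  have "{..<20::nat} = {0..19}" by auto
  then show ?thesis by simp
qed

lemma sum_S1: "(\<Sum>k\<in>S1. g k) = (\<Sum>m<20. g (Suc m))"
  unfolding S1_Suc by (simp add: sum.reindex)

lemma sum22: "(\<Sum>k<22. g k) = g 0 + (\<Sum>k\<in>S1. g k) + g 21"
proof -
  have "{..<22::nat} = insert 0 (insert 21 S1)" by auto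
  then show ?thesis by (simp add: algebra_simps)
qed

lemma Ff: "j < 22 \<Longrightarrow> Fc *v f j = (\<Sum>k<22. Mf j k *s f k)"
proof -
  assume j: "j < 22"
  consider "j = 0" | "j \<in> S1" | "j = 21" using j by force
  then show ?thesis
  proof cases
    case 1 then show ?thesis by (simp add: sum22 Mf_def Ff0)
  next
    case 3 then show ?thesis by (simp add: sum22 Mf_def Ff2)
  next
    case 2
    from 2[unfolded S1_Suc] obtain l where l: "l < 20" "j = Suc l" by auto
    have "(\<Sum>k<22. Mf j k *s f k) = (\<Sum>k\<in>S1. Mf j k *s f k)" using 2 by (simp add: sum22 Mf_def)
    also have "\<dots> = (\<Sum>m<20. Mf j (Suc m) *s f (Suc m))" by (rule sum_S1)
    also have "\<dots> = (\<Sum>m<20. (of_nat q * A l m) *s f (Suc m))" using l by (simp add: Mf_def)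
    also have "\<dots> = Fc *v f j" using l Ff1[of l]
      by (simp add: vec.scale_sum_right vector_smult_assoc)
    finally show ?thesis by simp
  qed
qed

lemma coF: "k < 22 \<Longrightarrow> co (Fc *v y) k = (\<Sum>j<22. co y j * Mf j k)"
proof -
  assume k: "k < 22"
  have "Fc *v y = Fc *v (\<Sum>j<22. co y j *s f j)" by (subst co_spec[of y]) (rule refl)
  also have "\<dots> = (\<Sum>j<22. co y j *s (Fc *v f j))" by (simp add: vec.sum vec.scale)
  finally have e: "Fc *v y = (\<Sum>j<22. co y j *s (Fc *v f j))" .
  have "j < 22 \<Longrightarrow> co (Fc *v f j) k = Mf j k" for j using Ff[of j] co_unique k by simp
  then show ?thesis unfolding e using k by (simp add: co_sum co_scale)
qed

lemma eig: "Fc *v y = lam *s y \<Longrightarrow> k < 22 \<Longrightarrow> (\<Sum>j<22. co y j * Mf j k) = lam * co y k"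
  using coF[of k y] co_scale[of k lam y] by simp

lemma eig0: "Fc *v y = lam *s y \<Longrightarrow> co y 0 * \<alpha>0 = lam * co y 0"
  using eig[of y lam 0] by (simp add: sum22 Mf_def)

lemma eig2: "Fc *v y = lam *s y \<Longrightarrow> co y 21 * Q2 = lam * co y 21"
  using eig[of y lam 21] by (simp add: sum22 Mf_def)

lemma eig1: "Fc *v y = lam *s y \<Longrightarrow> k \<in> S1 \<Longrightarrow>
    (\<Sum>j\<in>S1. co y j * (of_nat q * A (j-1) (k-1))) = lam * co y k"
proof -
  assume y: "Fc *v y = lam *s y" and k: "k \<in> S1"
  have "(\<Sum>j\<in>S1. co y j * Mf j k) = (\<Sum>j\<in>S1. co y j * (of_nat q * A (j-1) (k-1)))"
    using k by (intro sum.cong) (auto simp: Mf_def)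
  then show ?thesis using eig[OF y, of k] k by (simp add: sum22 Mf_def)
qed

lemma qpt: "of_nat q = (of_nat p * of_nat (p ^ (a - 1)) :: complex)"
proof -
  have "q = p * p ^ (a - 1)" using qa by (simp add: power_eq_if)
  then show ?thesis by (metis of_nat_mult)
qed


lemma block1:
  assumes y: "Fc *v y = lam *s y" and lk: "lam * \<kappa> = 1" and kR: "\<kappa> \<in> R" and k: "k \<in> S1"
  shows "co y k = 0"
proof -
  obtain h where h: "bij_betw h (UNIV::'n set) {..<22::nat}"
    using ex_bij_betw_finite_nat[of "UNIV::'n set"] cardn by (auto simp: atLeast0LessThan)
  define v :: "complex^'n" where "v = (\<chi> i. if h i \<in> S1 then co y (h i) else 0)"
  define N :: "complex^'n^'n" where
    "N = (\<chi> i i'. if h i \<in> S1 \<and> h i' \<in> S1 then A (h i' - 1) (h i - 1) else 0)"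
  define t where "t = of_nat (p ^ (a - 1)) * \<kappa>"
  have pt: "of_nat p * t = of_nat q * \<kappa>" unfolding t_def qpt by simp
  have NR: "N$i$j \<in> R" for i j by (simp add: N_def inR)
  have tR: "t \<in> R" using kR by (simp add: t_def)
  have "v = (of_nat p * t) *s (N *v v)"
  proof (subst vec_eq_iff, intro allI)
    fix i
    define g where "g j = (if h i \<in> S1 \<and> j \<in> S1 then A (j - 1) (h i - 1) * co y j else 0)" for j
    have "(N *v v)$i = (\<Sum>i'\<in>UNIV. g (h i'))"
      by (simp add: matrix_vector_mult_def N_def v_def g_def) (intro sum.cong; simp)
    also have "\<dots> = (\<Sum>j<22. g j)" by (rule sum.reindex_bij_betw[OF h])
    also have "\<dots> = (if h i \<in> S1 then (\<Sum>j\<in>S1. A (j - 1) (h i - 1) * co y j) else 0)"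
      by (cases "h i \<in> S1") (auto simp: sum22 g_def)
    finally have Nv: "(N *v v)$i = (if h i \<in> S1 then (\<Sum>j\<in>S1. A (j - 1) (h i - 1) * co y j) else 0)" .
    show "v$i = ((of_nat p * t) *s (N *v v))$i"
    proof (cases "h i \<in> S1")
      case True
      have "co y (h i) = \<kappa> * (lam * co y (h i))" using lk by (simp add: algebra_simps)
      also have "\<dots> = \<kappa> * (\<Sum>j\<in>S1. co y j * (of_nat q * A (j-1) (h i - 1)))"
        using eig1[OF y True] by simp
      also have "\<dots> = of_nat q * \<kappa> * (\<Sum>j\<in>S1. A (j-1) (h i - 1) * co y j)"
        by (simp add: sum_distrib_left algebra_simps)
      finally show ?thesis using True Nv pt by (simp add: v_def)
    next
      case False
      have 1: "(N *v v)$i = 0" unfolding Nv using False by (rule if_not_P)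
      have 2: "v$i = 0" unfolding v_def vec_lambda_beta using False by (rule if_not_P)
      show ?thesis using 1 2 by simp
    qed
  qed
  then have v0: "v = 0" by (rule kernel_zero[OF NR tR])
  have "k \<in> h ` UNIV" using h k bij_betw_imp_surj_on by fastforce
  then obtain i where hi: "h i = k" by auto
  have "v$i = 0" using v0 by simp
  then show ?thesis using hi k unfolding v_def by simp
qed

lemma f_nz: "j < 22 \<Longrightarrow> f j \<noteq> 0"
proof
  assume j: "j < 22" and "f j = 0"
  then have "co (f j) j = co (0 *s f j) j" by simp
  then show False using co_f[OF j j] co_scale[OF j, of 0 "f j"] by simp
qed

lemma q_nz: "(of_nat q :: complex) \<noteq> 0"
  using qa p1 by simp

lemma cnj_eig:
  assumes "y \<noteq> 0" "Fc *v y = lam *s y"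
  shows "lam * cnj lam = of_nat q ^ 2" "Fc *v vcnj y = cnj lam *s vcnj y" "vcnj y \<noteq> 0"
proof -
  have "cmod lam = real q" using Fmod assms by blast
  then show "lam * cnj lam = of_nat q ^ 2" using complex_norm_square[of lam] by simp
  show "Fc *v vcnj y = cnj lam *s vcnj y" using assms Freal[of y] by (simp add: vcnj_scale)
  show "vcnj y \<noteq> 0" using assms by simp
qed

lemma nonunit_a: "\<alpha>0 \<noteq> Q2"
proof
  assume "\<alpha>0 = Q2"
  then have "1 = of_nat q ^ 2 * \<gamma> * \<beta>0" using units by simp
  also have "\<dots> = of_nat p * (of_nat (p ^ (a - 1)) * of_nat q * \<gamma> * \<beta>0)"
    by (simp add: qpt[symmetric] power2_eq_square qpt algebra_simps)
  finally show False using R_nonunit[of "of_nat (p ^ (a - 1)) * of_nat q * \<gamma> * \<beta>0"] inR by simp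
qed

lemma nonunit_b: "Q2 \<noteq> \<delta>"
proof
  assume "Q2 = \<delta>"
  then have "1 = of_nat q ^ 2 * \<gamma> * \<gamma>" using units by (simp add: algebra_simps)
  also have "\<dots> = of_nat p * (of_nat (p ^ (a - 1)) * of_nat q * \<gamma> * \<gamma>)"
    by (simp add: power2_eq_square qpt algebra_simps)
  finally show False using R_nonunit[of "of_nat (p ^ (a - 1)) * of_nat q * \<gamma> * \<gamma>"] inR by simp
qed

lemma cnjQ2: "cnj Q2 = \<delta>"
proof -
  have "Q2 * cnj Q2 = of_nat q ^ 2" using cnj_eig(1)[OF f_nz Ff2] by simp
  then have "of_nat q ^ 2 * (\<gamma> * cnj Q2) = of_nat q ^ 2 * 1" by (simp add: algebra_simps)
  then have "\<gamma> * cnj Q2 = 1" using q_nz by (metis mult_left_cancel power_not_zero)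
  then have "\<delta> = \<delta> * (\<gamma> * cnj Q2)" by simp
  also have "\<dots> = (\<gamma> * \<delta>) * cnj Q2" by (simp only: mult.assoc mult.left_commute)
  finally show ?thesis using units by simp
qed

lemma y_V0: "(\<And>j. j \<in> S1 \<Longrightarrow> co y j = 0) \<Longrightarrow> co y 21 = 0 \<Longrightarrow> y = co y 0 *s f 0"
proof (rule eq_co)
  fix j :: nat assume j: "j < 22" "\<And>j. j \<in> S1 \<Longrightarrow> co y j = 0" "co y 21 = 0"
  have "j = 0 \<or> j \<in> S1 \<or> j = 21" using j by auto
  then show "co y j = co (co y 0 *s f 0) j" using j by (auto simp: co_scale co_f)
qed

lemma step1: "\<exists>a'. a' \<noteq> 0 \<and> vcnj (f 21) = a' *s f 0"
proof -
  define y where "y = vcnj (f 21)"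
  have y: "Fc *v y = \<delta> *s y" "y \<noteq> 0" using cnj_eig(2,3)[OF f_nz Ff2] cnjQ2 by (simp_all add: y_def)
  have b1: "co y j = 0" if "j \<in> S1" for j
    using block1[OF y(1) _ inR(3) that] units by (simp add: mult.commute)
  have "co y 21 * Q2 = \<delta> * co y 21" using eig2[OF y(1)] .
  then have b2: "co y 21 = 0" using nonunit_b by (metis mult.commute mult_cancel_left)
  have e: "y = co y 0 *s f 0" using y_V0 b1 b2 by blast
  then have "co y 0 \<noteq> 0" using y(2) by auto
  then show ?thesis using e y_def by blast
qed

definition T :: "nat \<Rightarrow> nat set" where "T s = (if s = 0 then {0} else if s = 1 then S1 else {21::nat})"
definition V :: "nat \<Rightarrow> (complex^'n) set" where "V s = vec.span (f ` T s)"

lemma T_sub: "T s \<subseteq> {..<22}" by (auto simp: T_def)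

lemma V_co: "V s = {y. \<forall>j<22. j \<notin> T s \<longrightarrow> co y j = 0}"
  unfolding V_def by (rule span_sub[OF T_sub])

lemma V1_iff: "y \<in> V 1 \<longleftrightarrow> co y 0 = 0 \<and> co y 21 = 0"
proof -
  have "(\<forall>j<22. j \<notin> S1 \<longrightarrow> co y j = 0) \<longleftrightarrow> co y 0 = 0 \<and> co y 21 = 0"
  proof safe
    fix j :: nat assume "co y 0 = 0" "co y 21 = 0" "j < 22" "j \<notin> S1"
    then have "j = 0 \<or> j = 21" by auto
    then show "co y j = 0" using \<open>co y 0 = 0\<close> \<open>co y 21 = 0\<close> by auto
  qed auto
  then show ?thesis by (simp add: V_co T_def)
qed

lemma V0: "V 0 = vec.span {f 0}" by (simp add: V_def T_def)
lemma V2: "V 2 = vec.span {f 21}" by (simp add: V_def T_def)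

lemma step2: "vcnj ` V 0 = V 2 \<and> vcnj ` V 2 = V 0"
proof -
  obtain a' where a': "a' \<noteq> 0" "vcnj (f 21) = a' *s f 0" using step1 by blast
  have "f 21 = cnj a' *s vcnj (f 0)" using arg_cong[OF a'(2), of vcnj] by (simp add: vcnj_scale)
  then have "inverse (cnj a') *s f 21 = vcnj (f 0)" using a'(1) by (simp add: vector_smult_assoc)
  then have c0: "vcnj (f 0) = inverse (cnj a') *s f 21" by simp
  have "vcnj ` V 0 = vec.span {inverse (cnj a') *s f 21}" by (simp add: V0 vcnj_span c0)
  also have "\<dots> = V 2" using a'(1) by (simp add: span_single_scale V2)
  finally have 1: "vcnj ` V 0 = V 2" .
  have "vcnj ` V 2 = vec.span {a' *s f 0}" by (simp add: V2 vcnj_span a'(2))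
  also have "\<dots> = V 0" using a'(1) by (simp add: span_single_scale V0)
  finally show ?thesis using 1 by simp
qed

lemma claimD:
  assumes yV: "y \<in> V 1" and ye: "Fc *v y = lam *s y"
  shows "vcnj y \<in> V 1"
proof (cases "y = 0")
  case True then show ?thesis using yV by simp
next
  case False
  define z where "z = vcnj y"
  have z: "Fc *v z = cnj lam *s z" "z \<noteq> 0" and ll: "lam * cnj lam = of_nat q ^ 2"
    using cnj_eig[OF False ye] by (simp_all add: z_def)
  have y0: "co y 0 = 0" "co y 21 = 0" using yV V1_iff by auto
  have z21: "co z 21 = 0"
  proof (rule ccontr)
    assume nz: "co z 21 \<noteq> 0"
    have "co z 21 * Q2 = cnj lam * co z 21" using eig2[OF z(1)] .
    then have "Q2 = cnj lam" using nz by (simp add: mult.commute)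
    then have lam: "lam = \<delta>" using cnjQ2 by (metis complex_cnj_cnj)
    have "co y j = 0" if "j \<in> S1" for j
      using block1[OF ye[unfolded lam] _ inR(3) that] units by (simp add: mult.commute)
    then have "y = co y 0 *s f 0" using y_V0 y0 by blast
    then show False using False y0 by simp
  qed
  have z0: "co z 0 = 0"
  proof (rule ccontr)
    assume nz: "co z 0 \<noteq> 0"
    have "co z 0 * \<alpha>0 = cnj lam * co z 0" using eig0[OF z(1)] .
    then have l: "cnj lam = \<alpha>0" using nz by (simp add: mult.commute)
    have b1: "co z j = 0" if "j \<in> S1" for j
      using block1[OF z(1)[unfolded l] _ inR(2) that] units by simp
    have ez: "z = co z 0 *s f 0" using y_V0 b1 z21 by blast
    obtain a' where a': "a' \<noteq> 0" "vcnj (f 21) = a' *s f 0" using step1 by blast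
    have "f 21 = cnj a' *s vcnj (f 0)" using arg_cong[OF a'(2), of vcnj] by (simp add: vcnj_scale)
    then have c0: "vcnj (f 0) = inverse (cnj a') *s f 21" using a'(1) by (simp add: vector_smult_assoc)
    have "y = vcnj z" by (simp add: z_def)
    also have "\<dots> = (cnj (co z 0) * inverse (cnj a')) *s f 21"
      by (subst ez) (simp add: vcnj_scale c0 vector_smult_assoc)
    finally have "co y 21 = cnj (co z 0) * inverse (cnj a')"
      using co_scale[of 21 _ "f 21"] co_f[of 21 21] by simp
    then show False using y0 nz a'(1) by simp
  qed
  show ?thesis using z0 z21 V1_iff z_def by simp
qed

definition pr where "pr y = (\<Sum>j\<in>S1. co y j *s f j)"

lemma co_pr: "k < 22 \<Longrightarrow> co (pr y) k = (if k \<in> S1 then co y k else 0)"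
proof (rule co_unique)
  show "pr y = (\<Sum>k<22. (if k \<in> S1 then co y k else 0) *s f k)"
    unfolding pr_def by (simp add: sum22)
qed

lemma pr_V1: "pr y \<in> V 1"
proof -
  have "co (pr y) 0 = 0 \<and> co (pr y) 21 = 0" using co_pr[of 0 y] co_pr[of 21 y] by simp
  then show ?thesis using V1_iff by blast
qed

lemma pr_eig:
  assumes "Fc *v w = d *s w"
  shows "Fc *v pr w = d *s pr w"
proof (rule eq_co)
  fix k :: nat assume k: "k < 22"
  have "co (Fc *v pr w) k = (\<Sum>j<22. co (pr w) j * Mf j k)" using coF[OF k] .
  also have "\<dots> = (\<Sum>j\<in>S1. co w j * Mf j k)" by (simp add: sum22 co_pr)
  also have "\<dots> = (if k \<in> S1 then d * co w k else 0)"
  proof (cases "k \<in> S1")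
    case True
    have "(\<Sum>j\<in>S1. co w j * Mf j k) = (\<Sum>j<22. co w j * Mf j k)"
      using True by (simp add: sum22 Mf_def)
    also have "\<dots> = d * co w k" using eig[OF assms k] .
    finally show ?thesis using True by simp
  next
    case False
    have "(\<Sum>j\<in>S1. co w j * Mf j k) = 0" using False by (intro sum.neutral) (auto simp: Mf_def)
    then show ?thesis using False by auto
  qed
  also have "\<dots> = co (d *s pr w) k" using k by (simp add: co_scale co_pr)
  finally show "co (Fc *v pr w) k = co (d *s pr w) k" .
qed

lemma step3_sub: "x \<in> V 1 \<Longrightarrow> vcnj x \<in> V 1"
proof -
  assume xV: "x \<in> V 1"
  obtain P :: "complex^'n^'n" and d where P: "invertible P" "Fc ** P = P ** (\<chi> i j. if i = j then d i else 0)"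
    using Fdiag by auto
  obtain P' where P': "P ** P' = mat 1" using P(1) unfolding invertible_def by blast
  define w where "w j = column j P" for j
  have we: "Fc *v w j = d j *s w j" for j
  proof -
    have "(Fc ** P)$i$j = P$i$j * d j" for i
    proof -
      have "(Fc ** P)$i$j = (\<Sum>k\<in>UNIV. P$i$k * (if k = j then d k else 0))"
        using P(2) by (simp add: matrix_matrix_mult_def)
      also have "\<dots> = (\<Sum>k\<in>UNIV. if k = j then P$i$k * d k else 0)" by (intro sum.cong) auto
      finally show ?thesis by simp
    qed
    then show ?thesis
      by (simp add: vec_eq_iff w_def column_def matrix_vector_mult_def matrix_matrix_mult_def)
  qed
  define c where "c = P' *v x"
  have xs: "x = (\<Sum>j\<in>UNIV. c$j *s w j)"
  proof -
    have "x = P *v c" by (simp add: c_def matrix_vector_mul_assoc P')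
    then show ?thesis by (simp add: matrix_mult_sum w_def)
  qed
  have xp: "x = (\<Sum>j\<in>UNIV. c$j *s pr (w j))"
  proof (rule eq_co)
    fix k :: nat assume k: "k < 22"
    have "co x k = (\<Sum>j\<in>UNIV. c$j * co (w j) k)"
      by (subst xs) (simp add: co_sum[OF _ k] co_scale[OF k])
    moreover have "co (\<Sum>j\<in>UNIV. c$j *s pr (w j)) k = (\<Sum>j\<in>UNIV. c$j * (if k \<in> S1 then co (w j) k else 0))"
      by (simp add: co_sum[OF _ k] co_scale[OF k] co_pr[OF k])
    moreover have "k \<notin> S1 \<Longrightarrow> co x k = 0" using xV k by (auto simp: V_co T_def)
    ultimately show "co x k = co (\<Sum>j\<in>UNIV. c$j *s pr (w j)) k" by (cases "k \<in> S1") auto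
  qed
  have "vcnj x = (\<Sum>j\<in>UNIV. cnj (c$j) *s vcnj (pr (w j)))"
    by (subst xp) (simp add: vcnj_sum vcnj_scale)
  also have "\<dots> \<in> V 1"
    unfolding V_def
    by (intro vec.span_sum vec.span_scale, unfold V_def[symmetric])
       (rule claimD[OF pr_V1 pr_eig[OF we]])
  finally show ?thesis .
qed

lemma step3: "vcnj ` V 1 = V 1"
proof
  show "vcnj ` V 1 \<subseteq> V 1" using step3_sub by blast
  show "V 1 \<subseteq> vcnj ` V 1"
  proof
    fix x assume "x \<in> V 1"
    then have "vcnj x \<in> V 1" by (rule step3_sub)
    then show "x \<in> vcnj ` V 1" by (metis image_eqI vcnj_vcnj)
  qed
qed

definition ps where "ps s y = (\<Sum>j\<in>T s. co y j *s f j)"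

lemma co_ps: "k < 22 \<Longrightarrow> co (ps s y) k = (if k \<in> T s then co y k else 0)"
proof (rule co_unique)
  have "ps s y = (\<Sum>j\<in>{..<22}. if j \<in> T s then co y j *s f j else 0)"
    unfolding ps_def using T_sub[of s] by (simp add: sum.If_cases Int_absorb1)
  then show "ps s y = (\<Sum>k<22. (if k \<in> T s then co y k else 0) *s f k)"
    by (simp add: if_distrib[of "\<lambda>c. c *s _"] cong: if_cong)
qed

lemma ps_V: "ps s y \<in> V s"
  using co_ps by (auto simp: V_co)

lemma T_cases: "k < 22 \<Longrightarrow> (k \<in> T 0 \<and> k \<notin> T 1 \<and> k \<notin> T 2) \<or> (k \<notin> T 0 \<and> k \<in> T 1 \<and> k \<notin> T 2) \<or>
   (k \<notin> T 0 \<and> k \<notin> T 1 \<and> k \<in> T 2)"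
  by (auto simp: T_def)

lemma ps_sum: "v = ps 0 v + ps 1 v + ps 2 v"
proof (rule eq_co)
  fix k :: nat assume k: "k < 22"
  show "co v k = co (ps 0 v + ps 1 v + ps 2 v) k"
    using T_cases[OF k] by (auto simp: co_add[OF k] co_ps[OF k])
qed

lemma ps_uniq:
  assumes "x0 \<in> V 0" "x1 \<in> V 1" "x2 \<in> V 2"
  shows "x0 = ps 0 (x0 + x1 + x2) \<and> x1 = ps 1 (x0 + x1 + x2) \<and> x2 = ps 2 (x0 + x1 + x2)"
proof -
  have z: "k < 22 \<Longrightarrow> k \<notin> T s \<Longrightarrow> x \<in> V s \<Longrightarrow> co x k = 0" for k s x by (auto simp: V_co)
  have "x = ps s (x0 + x1 + x2)" if "s \<le> 2" "x = (if s = 0 then x0 else if s = 1 then x1 else x2)" for s x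
  proof (rule eq_co)
    fix k :: nat assume k: "k < 22"
    show "co x k = co (ps s (x0 + x1 + x2)) k"
      using T_cases[OF k] that z[OF k, of 0 x0] z[OF k, of 1 x1] z[OF k, of 2 x2] assms
      by (auto simp: co_add[OF k] co_ps[OF k] le_Suc_eq numeral_2_eq_2)
  qed
  from this[of 0] this[of 1] this[of 2] show ?thesis by simp
qed

lemma csub_V: "csubspace (V s)"
  unfolding csubspace_def V_def by (auto intro: vec.span_zero vec.span_add vec.span_scale)

lemma final_conj: "\<forall>s\<in>{0,1,2::nat}. vcnj ` V s = V (2 - s)"
  using step2 step3 by auto

lemma final_decomp:
  defines "H \<equiv> (\<lambda>k::int. if k \<in> {0,1,2} then V (nat k) else {0})"
  shows "\<exists>!h. (\<forall>p\<in>{0,1,2}. h p \<in> H p) \<and> (\<forall>p. p \<notin> {0,1,2} \<longrightarrow> h p = 0) \<and> v = (\<Sum>p\<in>{0,1,2}. h p)"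
proof -
  define h where "h p = (if p \<in> {0,1,2} then ps (nat p) v else 0)" for p :: int
  have sum3: "(\<Sum>p\<in>{0,1,2::int}. g p) = g 0 + g 1 + g 2" for g :: "int \<Rightarrow> complex^'n"
    by (simp add: algebra_simps)
  show ?thesis
  proof (rule ex1I[of _ h])
    show "(\<forall>p\<in>{0,1,2}. h p \<in> H p) \<and> (\<forall>p. p \<notin> {0,1,2} \<longrightarrow> h p = 0) \<and> v = (\<Sum>p\<in>{0,1,2}. h p)"
      using ps_sum[of v] by (auto simp: h_def H_def ps_V sum3)
  next
    fix h' assume h': "(\<forall>p\<in>{0,1,2}. h' p \<in> H p) \<and> (\<forall>p. p \<notin> {0,1,2} \<longrightarrow> h' p = 0) \<and> v = (\<Sum>p\<in>{0,1,2}. h' p)"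
    have m: "h' 0 \<in> V 0" "h' 1 \<in> V 1" "h' 2 \<in> V 2" using h' by (auto simp: H_def)
    have v: "v = h' 0 + h' 1 + h' 2" using h' by (simp add: sum3)
    have e: "h' 0 = ps 0 v" "h' 1 = ps 1 v" "h' 2 = ps 2 v"
      using ps_uniq[OF m] unfolding v[symmetric] by blast+
    have out: "\<forall>p. p \<notin> {0,1,2} \<longrightarrow> h' p = 0" using h' by blast
    show "h' = h"
    proof
      fix p :: int
      show "h' p = h p"
        using e out by (cases "p \<in> {0,1,2}") (auto simp: h_def)
    qed
  qed
qed

end



lemma cspan_eq: "cspan S = vec.span S"
  by (auto simp: cspan_def vec.span_explicit)

context zpe begin

definition good :: "'n zpvec set \<Rightarrow> nat \<Rightarrow> (nat \<Rightarrow> complex^'n) \<Rightarrow> bool" where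
  "good N r e \<longleftrightarrow> (\<forall>y\<in>N. y \<in> ZpV p \<and> (\<exists>g. (\<forall>l<r. g l \<in> R) \<and> iota_vec \<iota> y = (\<Sum>l<r. g l *s e l))) \<and>
         (\<forall>l<r. \<exists>y\<in>N. iota_vec \<iota> y = e l)"

lemma good_ex: "zp_free_submodule p N r \<Longrightarrow> \<exists>e. good N r e"
  unfolding good_def by (rule free_facts)

lemma good_span_mem: "good N r e \<Longrightarrow> y \<in> N \<Longrightarrow> iota_vec \<iota> y \<in> vec.span (e ` {..<r})"
proof -
  assume "good N r e" "y \<in> N"
  then obtain g where "iota_vec \<iota> y = (\<Sum>l<r. g l *s e l)" unfolding good_def by blast
  moreover have "(\<Sum>l<r. g l *s e l) \<in> vec.span (e ` {..<r})"
    by (intro vec.span_sum vec.span_scale vec.span_base) auto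
  ultimately show ?thesis by simp
qed

lemma good_bc: "good N r e \<Longrightarrow> base_change \<iota> N = vec.span (e ` {..<r})"
proof -
  assume g: "good N r e"
  have "vec.span (iota_vec \<iota> ` N) = vec.span (e ` {..<r})"
  proof (rule vec.span_eq[THEN iffD2], rule conjI)
    show "iota_vec \<iota> ` N \<subseteq> vec.span (e ` {..<r})" using good_span_mem[OF g] by blast
    show "e ` {..<r} \<subseteq> vec.span (iota_vec \<iota> ` N)"
    proof
      fix x assume "x \<in> e ` {..<r}"
      then obtain l where "l < r" "x = e l" by auto
      then obtain y where "y \<in> N" "iota_vec \<iota> y = x" using g unfolding good_def by metis
      then show "x \<in> vec.span (iota_vec \<iota> ` N)" by (metis imageI vec.span_base)
    qed
  qed
  then show ?thesis by (simp add: base_change_def cspan_eq)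
qed

lemma good_F:
  fixes F :: "int^'n^'n"
  assumes g: "good N r e" and FN: "zpv_mat p F ` N = zpv_smul_int p c ` N" and l: "l < r"
  shows "\<exists>g. (\<forall>m<r. g m \<in> R) \<and> complex_mat F *v e l = of_int c *s (\<Sum>m<r. g m *s e m)"
    and "\<exists>g. (\<forall>m<r. g m \<in> R) \<and> of_int c *s e l = complex_mat F *v (\<Sum>m<r. g m *s e m)"
proof -
  obtain y where y: "y \<in> N" "iota_vec \<iota> y = e l" using g l unfolding good_def by metis
  have yZ: "y \<in> ZpV p" using g y unfolding good_def by blast
  have "zpv_mat p F y \<in> zpv_smul_int p c ` N" using FN y by blast
  then obtain y' where y': "y' \<in> N" "zpv_mat p F y = zpv_smul_int p c y'" by auto
  obtain g' where g': "\<forall>m<r. g' m \<in> R" "iota_vec \<iota> y' = (\<Sum>m<r. g' m *s e m)" and y'Z: "y' \<in> ZpV p"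
    using g y'(1) unfolding good_def by blast
  have "complex_mat F *v e l = iota_vec \<iota> (zpv_mat p F y)" using ivec_mat[OF yZ] y by simp
  also have "\<dots> = of_int c *s (\<Sum>m<r. g' m *s e m)" using ivec_smul[OF y'Z] y' g' by simp
  finally show "\<exists>g. (\<forall>m<r. g m \<in> R) \<and> complex_mat F *v e l = of_int c *s (\<Sum>m<r. g m *s e m)"
    using g' by blast
  have "zpv_smul_int p c y \<in> zpv_mat p F ` N" using FN y by blast
  then obtain z where z: "z \<in> N" "zpv_smul_int p c y = zpv_mat p F z" by auto
  obtain h where h: "\<forall>m<r. h m \<in> R" "iota_vec \<iota> z = (\<Sum>m<r. h m *s e m)" and zZ: "z \<in> ZpV p"
    using g z(1) unfolding good_def by blast
  have "of_int c *s e l = iota_vec \<iota> (zpv_smul_int p c y)" using ivec_smul[OF yZ] y by simp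
  also have "\<dots> = complex_mat F *v (\<Sum>m<r. h m *s e m)" using ivec_mat[OF zZ] z h by simp
  finally show "\<exists>g. (\<forall>m<r. g m \<in> R) \<and> of_int c *s e l = complex_mat F *v (\<Sum>m<r. g m *s e m)"
    using h by blast
qed

end



theorem lemma3p3:
  fixes p a q :: nat
    and \<iota> :: "(nat \<Rightarrow> int) \<Rightarrow> complex"
    and G F :: "int^'n^'n"
    and Ms :: "nat \<Rightarrow> 'n zpvec set"
  assumes "prime p" and "a > 0" and "q = p ^ a"
    and "ring_embedding p \<iota>"
    and "M1 G" and "M2 q G F" and "M3 q F" and "M4 p q F Ms"
  shows "(\<forall>s\<in>{0,1,2}. vcnj ` base_change \<iota> (Ms s) = base_change \<iota> (Ms (2 - s))) \<and>
         Z_hodge_structure 2 (\<lambda>k. if k \<in> {0,1,2} then base_change \<iota> (Ms (nat k)) else {0})"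
proof -
  have p1: "p > 1" using assms(1) by (rule prime_gt_1_nat)
  interpret Z: zpe p \<iota> using p1 assms(4) by unfold_locales
  have card: "CARD('n) = 22"
    using assms(5) unfolding M1_def has_signature_def by simp
  have fs0: "zp_free_submodule p (Ms 0) 1" and fs1: "zp_free_submodule p (Ms 1) 20"
    and fs2: "zp_free_submodule p (Ms 2) 1"
    and dec: "\<forall>x\<in>ZpV p. \<exists>!(x0, x1, x2). x0 \<in> Ms 0 \<and> x1 \<in> Ms 1 \<and> x2 \<in> Ms 2 \<and>
         x = zpv_add p x0 (zpv_add p x1 x2)"
    and FM: "\<forall>s\<le>2. zpv_mat p F ` Ms s = zpv_smul_int p (int q ^ s) ` Ms s"
    using assms(8) unfolding M4_def by blast+
  obtain e0 where g0: "Z.good (Ms 0) 1 e0" using Z.good_ex[OF fs0] by blast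
  obtain e1 where g1: "Z.good (Ms 1) 20 e1" using Z.good_ex[OF fs1] by blast
  obtain e2 where g2: "Z.good (Ms 2) 1 e2" using Z.good_ex[OF fs2] by blast
  define f where "f j = (if j = 0 then e0 0 else if j \<le> 20 then e1 (j - 1) else e2 0)" for j
  have im0: "e0 ` {..<1} = f ` {0}" by (auto simp: f_def)
  have im2: "e2 ` {..<1} = f ` {21}" by (auto simp: f_def)
  have im1: "e1 ` {..<20} = f ` {1..20}"
  proof -
    have "e1 ` {..<20} = (\<lambda>j. f (Suc j)) ` {..<20}" by (auto simp: f_def)
    also have "\<dots> = f ` (Suc ` {..<20})" by (simp add: image_image)
    also have "Suc ` {..<20} = {1..20::nat}"
    proof -
      have "{..<20::nat} = {0..19}" by auto
      then show ?thesis by simp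
    qed
    finally show ?thesis .
  qed

  have bc0: "base_change \<iota> (Ms 0) = vec.span (f ` {0})" using Z.good_bc[OF g0] im0 by simp
  have bc1: "base_change \<iota> (Ms 1) = vec.span (f ` {1..20})" using Z.good_bc[OF g1] im1 by simp
  have bc2: "base_change \<iota> (Ms 2) = vec.span (f ` {21})" using Z.good_bc[OF g2] im2 by simp
  have sub22: "vec.span (f ` {0}) \<subseteq> vec.span (f ` {..<22})" "vec.span (f ` {1..20}) \<subseteq> vec.span (f ` {..<22})"
     "vec.span (f ` {21}) \<subseteq> vec.span (f ` {..<22})"
    by (auto intro!: vec.span_mono)
  have span: "vec.span (f ` {..<22}) = UNIV"
  proof -
    have "cart_basis \<subseteq> vec.span (f ` {..<22})"
    proof
      fix x :: "complex^'n" assume "x \<in> cart_basis"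
      then obtain i where xi: "x = axis i 1" unfolding cart_basis_def by blast
      define std :: "'n zpvec" where "std = (\<lambda>j. if j = i then Z.zc 1 else Z.zc 0)"
      have stdZ: "std \<in> ZpV p" by (simp add: std_def ZpV_def)
      have istd: "iota_vec \<iota> std = x"
        by (simp add: xi std_def iota_vec_def axis_def vec_eq_iff Z.izc if_distrib cong: if_cong)
      obtain t where t: "(\<lambda>(x0, x1, x2). x0 \<in> Ms 0 \<and> x1 \<in> Ms 1 \<and> x2 \<in> Ms 2 \<and>
           std = zpv_add p x0 (zpv_add p x1 x2)) t"
        using ex1_implies_ex[OF dec[rule_format, OF stdZ]] by blast
      obtain x0 x1 x2 where "t = (x0, x1, x2)" by (cases t)
      then have xs: "x0 \<in> Ms 0" "x1 \<in> Ms 1" "x2 \<in> Ms 2" "std = zpv_add p x0 (zpv_add p x1 x2)"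
        using t by simp_all
      have Z0: "x0 \<in> ZpV p" using g0 xs(1) unfolding Z.good_def by blast
      have Z1: "x1 \<in> ZpV p" using g1 xs(2) unfolding Z.good_def by blast
      have Z2: "x2 \<in> ZpV p" using g2 xs(3) unfolding Z.good_def by blast
      have "x = iota_vec \<iota> x0 + (iota_vec \<iota> x1 + iota_vec \<iota> x2)"
        using istd xs(4) Z.ivec_add[OF Z1 Z2] Z.ivec_add[OF Z0 Z.ivec_add[OF Z1 Z2, THEN conjunct1]] by simp
      moreover have "iota_vec \<iota> x0 \<in> vec.span (f ` {..<22})"
        using Z.good_span_mem[OF g0 xs(1)] im0 sub22 by auto
      moreover have "iota_vec \<iota> x1 \<in> vec.span (f ` {..<22})"
        using Z.good_span_mem[OF g1 xs(2)] im1 sub22 by auto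
      moreover have "iota_vec \<iota> x2 \<in> vec.span (f ` {..<22})"
        using Z.good_span_mem[OF g2 xs(3)] im2 sub22 by auto
      ultimately show "x \<in> vec.span (f ` {..<22})" by (simp add: vec.span_add)
    qed
    then have "vec.span cart_basis \<subseteq> vec.span (f ` {..<22})"
      by (rule vec.span_minimal[OF _ vec.subspace_span])
    then show ?thesis by (simp add: top_le)
  qed
  interpret Fm: fam f "22::nat" using card span by unfold_locales
  define Fc where "Fc = complex_mat F"
  have fnz: "j < 22 \<Longrightarrow> f j \<noteq> 0" for j
  proof
    assume j: "j < 22" and "f j = 0"
    then have "Fm.co (f j) j = Fm.co (0 *s f j) j" by simp
    then show False using Fm.co_f[OF j j] Fm.co_scale[OF j, of 0 "f j"] by simp
  qed
  have cancel: "c *s f j = d *s f j \<Longrightarrow> j < 22 \<Longrightarrow> c = d" for c d j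
    using Fm.co_scale[of j c "f j"] Fm.co_scale[of j d "f j"] Fm.co_f[of j j] by auto
  have FM0: "zpv_mat p F ` Ms 0 = zpv_smul_int p 1 ` Ms 0" using FM by simp
  obtain \<alpha>0 where a0: "\<alpha>0 \<in> Z.R" "Fc *v f 0 = \<alpha>0 *s f 0"
    using Z.good_F(1)[OF g0 FM0, of 0] by (auto simp: Fc_def f_def)
  obtain \<beta>0 where b0: "\<beta>0 \<in> Z.R" "f 0 = Fc *v (\<beta>0 *s f 0)"
    using Z.good_F(2)[OF g0 FM0, of 0] by (auto simp: Fc_def f_def)
  have ab: "\<alpha>0 * \<beta>0 = 1"
  proof -
    have "1 *s f 0 = (\<alpha>0 * \<beta>0) *s f 0" using b0(2) a0(2) by (simp add: vec.scale vector_smult_assoc mult.commute)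
    then show ?thesis using cancel[of 1 0 "\<alpha>0 * \<beta>0"] by simp
  qed
  have FM2: "zpv_mat p F ` Ms 2 = zpv_smul_int p (int q ^ 2) ` Ms 2" using FM by simp
  obtain \<gamma> where c2: "\<gamma> \<in> Z.R" "Fc *v f 21 = (of_nat q ^ 2 * \<gamma>) *s f 21"
    using Z.good_F(1)[OF g2 FM2, of 0] by (auto simp: Fc_def f_def vector_smult_assoc)
  obtain \<delta> where d2: "\<delta> \<in> Z.R" "of_nat q ^ 2 *s f 21 = Fc *v (\<delta> *s f 21)"
    using Z.good_F(2)[OF g2 FM2, of 0] by (auto simp: Fc_def f_def)
  have gd: "\<gamma> * \<delta> = 1"
  proof -
    have "(of_nat q ^ 2 * 1) *s f 21 = (of_nat q ^ 2 * (\<gamma> * \<delta>)) *s f 21"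
      using d2(2) c2(2) by (simp add: vec.scale vector_smult_assoc algebra_simps)
    then have "of_nat q ^ 2 * 1 = (of_nat q ^ 2 * (\<gamma> * \<delta>) :: complex)" by (rule cancel) simp
    moreover have "(of_nat q ^ 2 :: complex) \<noteq> 0" using assms(3) p1 by simp
    ultimately show ?thesis by (metis mult_left_cancel)
  qed
  have FM1: "zpv_mat p F ` Ms 1 = zpv_smul_int p (int q) ` Ms 1" using FM by (metis one_le_numeral power_one_right)
  have "\<forall>l\<in>{..<20}. \<exists>g. (\<forall>m<20. g m \<in> Z.R) \<and> Fc *v e1 l = of_nat q *s (\<Sum>m<20. g m *s e1 m)"
    using Z.good_F(1)[OF g1 FM1] by (simp add: Fc_def)
  then obtain A0 where A0: "\<forall>l\<in>{..<20}. (\<forall>m<20. A0 l m \<in> Z.R) \<and> Fc *v e1 l = of_nat q *s (\<Sum>m<20. A0 l m *s e1 m)"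
    by (metis bchoice)
  define A where "A l m = (if l < 20 \<and> m < 20 then A0 l m else 0)" for l m
  have AR: "A l m \<in> Z.R" for l m using A0 by (simp add: A_def)
  have Ff1: "Fc *v f (Suc l) = of_nat q *s (\<Sum>m<20. A l m *s f (Suc m))" if "l < 20" for l
  proof -
    have "Fc *v f (Suc l) = Fc *v e1 l" using that by (simp add: f_def)
    also have "\<dots> = of_nat q *s (\<Sum>m<20. A0 l m *s e1 m)" using A0 that by simp
    also have "(\<Sum>m<20. A0 l m *s e1 m) = (\<Sum>m<20. A l m *s f (Suc m))"
      using that by (intro sum.cong) (auto simp: A_def f_def)
    finally show ?thesis .
  qed
  have Freal: "Fc *v vcnj v = vcnj (Fc *v v)" for v
    by (simp add: Fc_def vec_eq_iff matrix_vector_mult_def vcnj_def complex_mat_def)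
  have M3': "(\<exists>P::complex^'n^'n. \<exists>d::'n \<Rightarrow> complex. invertible P \<and>
        Fc ** P = P ** (\<chi> i j. if i = j then d i else 0))"
    "\<And>c v. v \<noteq> 0 \<Longrightarrow> Fc *v v = c *s v \<Longrightarrow> cmod c = real q"
    using assms(7) unfolding M3_def Fc_def by blast+
  interpret Ab: abs p \<iota> f Fc q a \<alpha>0 \<beta>0 \<gamma> \<delta> A
    using assms(2,3) a0 b0 ab c2 d2 gd AR Ff1 Freal M3' by unfold_locales auto
  have V0: "base_change \<iota> (Ms 0) = Ab.V 0" by (rule trans[OF bc0]) (simp add: Ab.V_def Ab.T_def)
  have V1: "base_change \<iota> (Ms 1) = Ab.V 1" by (rule trans[OF bc1]) (simp add: Ab.V_def Ab.T_def)
  have V2: "base_change \<iota> (Ms 2) = Ab.V 2" by (rule trans[OF bc2]) (simp add: Ab.V_def Ab.T_def)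
  have BV: "s \<in> {0,1,2} \<Longrightarrow> base_change \<iota> (Ms s) = Ab.V s" for s using V0 V1 V2 by auto
  have part1: "\<forall>s\<in>{0,1,2}. vcnj ` base_change \<iota> (Ms s) = base_change \<iota> (Ms (2 - s))"
    using Ab.final_conj BV by auto
  define H where "H = (\<lambda>k::int. if k \<in> {0,1,2} then Ab.V (nat k) else {0})"
  have HB: "(\<lambda>k. if k \<in> {0,1,2} then base_change \<iota> (Ms (nat k)) else {0}) = H"
    unfolding H_def using BV by (auto intro!: ext)
  have "Z_hodge_structure 2 H"
    unfolding Z_hodge_structure_def
  proof (intro conjI allI)
    fix k show "csubspace (H k)"
      by (simp add: H_def Ab.csub_V) (simp add: csubspace_def)
  next
    show "\<exists>A. finite A \<and> (\<forall>p. p \<notin> A \<longrightarrow> H p = {0}) \<and>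
        (\<forall>v. \<exists>!h. (\<forall>p\<in>A. h p \<in> H p) \<and> (\<forall>p. p \<notin> A \<longrightarrow> h p = 0) \<and> v = sum h A)"
    proof (intro exI[of _ "{0,1,2::int}"] conjI allI impI)
      show "finite {0,1,2::int}" by simp
      fix p :: int assume "p \<notin> {0,1,2}" then show "H p = {0}" by (simp add: H_def)
    next
      fix v show "\<exists>!h. (\<forall>p\<in>{0,1,2}. h p \<in> H p) \<and> (\<forall>p. p \<notin> {0,1,2} \<longrightarrow> h p = 0) \<and> v = sum h {0,1,2}"
        unfolding H_def by (rule Ab.final_decomp)
    qed
  next
    fix k :: int
    show "vcnj ` H k = H (2 - k)"
    proof (cases "k \<in> {0,1,2}")
      case True
      then have "nat (2 - k) = 2 - nat k" "nat k \<in> {0,1,2}" by auto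
      then have "vcnj ` Ab.V (nat k) = Ab.V (nat (2 - k))" using Ab.final_conj by metis
      moreover have t2: "2 - k \<in> {0,1,2}" using True by auto
      moreover have "H k = Ab.V (nat k)" "H (2 - k) = Ab.V (nat (2 - k))"
        using True t2 unfolding H_def by (simp_all only: if_True)
      ultimately show ?thesis by simp
    next
      case False
      then show ?thesis by (auto simp: H_def)
    qed
  qed
  then show ?thesis using part1 HB by simp
qed


end
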